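(* Let $u,v$ be weights on $\mathbb D$ and $\mathcal D$ a dyadic grid on $\mathbb T$. If there exist $C>0$ and $0<s<1$ such that $\langle u\rangle_{v,Q_I}\le C\langle u\rangle_{s,v,Q_I}$ for all $I\in\mathcal D$, then $u\in\mathrm{B}_\infty(\mathcal D,v)$.
   Context: $\mathbb D$ is the open unit disc, $\mathbb T$ the unit circle, $dA$ normalized area measure. A weight is a locally integrable, a.e. positive function. For measurable $f$, $0<p<\infty$, weight $v$, measurable $E$: $\langle f\rangle_{p,v,E}=\big(\int_E|f|^pv\,dA\big)^{1/p}/\big(\int_Ev\,dA\big)^{1/p}$, $\langle f\rangle_{v,E}=\langle f\rangle_{1,v,E}$. For an arc $I\subset\mathbb T$ with center $e^{i\theta_0}$ and normalized arclength $\ell(I)$ ($\ell(\mathbb T)=1$), $Q_I=\{re^{i\theta}\in\mathbb D:1-r\le\ell(I),|\theta-\theta_0|\le\ell(I)/2\}$ and $T_I=\{re^{i\theta}\in\mathbb D:\ell(I)/2\le1-r\le\ell(I),|\theta-\theta_0|\le\ell(I)/2\}$. A dyadic grid $\mathcal D$ is a collection of arcs of $\mathbb T$ such that: for each $k\in\mathbb N$, $\{I\in\mathcal D:\ell(I)=2^{-k}\}$ partitions $\mathbb T$; $\{T_I:I\in\mathcal D\}$ partitions $\mathbb D$; any two arcs of $\mathcal D$ are disjoint or nested; each $I\in\mathcal D$ is the union of $2^k$ arcs of $\mathcal D$ of length $2^{-k}\ell(I)$. The dyadic weighted maximal operator is $M_v^{\mathcal D}f(z)=\sup_{I\in\mathcal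 D:z\in Q_I}\langle f\rangle_{v,Q_I}$. A weight $u$ belongs to $\mathrm{B}_\infty(\mathcal D,v)$ if $[u]_{\mathrm{B}_\infty(\mathcal D,v)}=\sup_{I\in\mathcal D}\langle M_v^{\mathcal D}(u\chi_{Q_I})\rangle_{v,Q_I}/\langle u\rangle_{v,Q_I}<\infty$. *)

theory Defs
  imports "HOL-Analysis.Analysis"
begin

text \<open>An arc of the unit circle is represented by a pair (c, l): its centre e^{2 pi i c}
  (angle c measured in full turns) and its normalized arclength l, 0 < l <= 1.
  Arcs are taken half-open so that partitions are exact.\<close>
type_synonym arc = "real \<times> real"

definition arc_set :: "arc \<Rightarrow> complex set" where
  "arc_set I = {cis (2 * pi * \<theta>) | \<theta>. fst I - snd I / 2 \<le> \<theta> \<and> \<theta> < fst I + snd I / 2}"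

definition arclen :: "arc \<Rightarrow> real" where
  "arclen I = snd I"

definition Qbox :: "arc \<Rightarrow> complex set" where
  "Qbox I = {z. norm z < 1 \<and> 1 - norm z \<le> arclen I \<and>
     (\<exists>\<theta>. z = complex_of_real (norm z) * cis (2 * pi * \<theta>) \<and> \<bar>\<theta> - fst I\<bar> \<le> arclen I / 2)}"

text \<open>The top half T_I (half-open version, so that the T_I can partition the disc).\<close>
definition Tbox :: "arc \<Rightarrow> complex set" where
  "Tbox I = {z. norm z < 1 \<and> arclen I / 2 < 1 - norm z \<and> 1 - norm z \<le> arclen I \<and>
     (\<exists>\<theta>. z = complex_of_real (norm z) * cis (2 * pi * \<theta>) \<and>
          fst I - arclen I / 2 \<le> \<theta> \<and> \<theta> < fst I + arclen I / 2)}"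

definition dyadic_grid :: "arc set \<Rightarrow> bool" where
  "dyadic_grid D \<longleftrightarrow>
     (\<forall>I\<in>D. 0 < arclen I \<and> arclen I \<le> 1) \<and>
     (\<forall>k::nat.
        (\<forall>I\<in>D. \<forall>J\<in>D. arclen I = (1/2)^k \<and> arclen J = (1/2)^k \<and> I \<noteq> J \<longrightarrow>
            arc_set I \<inter> arc_set J = {}) \<and>
        \<Union>{arc_set I | I. I \<in> D \<and> arclen I = (1/2)^k} = sphere 0 1) \<and>
     (\<forall>I\<in>D. \<forall>J\<in>D. I \<noteq> J \<longrightarrow> Tbox I \<inter> Tbox J = {}) \<and>
     \<Union>(Tbox ` D) = ball 0 1 \<and>
     (\<forall>I\<in>D. \<forall>J\<in>D. arc_set I \<inter> arc_set J = {} \<or> arc_set I \<subseteq> arc_set J \<or> arc_set J \<subseteq> arc_set I) \<and>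
     (\<forall>I\<in>D. \<forall>k::nat. \<exists>S\<subseteq>D. card S = 2^k \<and> (\<forall>J\<in>S. arclen J = arclen I / 2^k) \<and>
          arc_set I = \<Union>(arc_set ` S))"

definition weight :: "(complex \<Rightarrow> real) \<Rightarrow> bool" where
  "weight w \<longleftrightarrow> w \<in> borel_measurable lebesgue \<and>
     (\<forall>K. compact K \<and> K \<subseteq> ball 0 1 \<longrightarrow> set_integrable lebesgue K w) \<and>
     (AE z in lebesgue. z \<in> ball 0 1 \<longrightarrow> 0 < w z)"

text \<open>Integral over E with respect to normalized area measure dA = dx dy / pi.\<close>
definition areaint :: "complex set \<Rightarrow> (complex \<Rightarrow> ennreal) \<Rightarrow> ennreal" where
  "areaint E g = ennreal (1 / pi) * (\<integral>\<^sup>+ z. g z * indicator E z \<partial>lebesgue)"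

definition epow :: "ennreal \<Rightarrow> real \<Rightarrow> ennreal" where
  "epow x q = (if x = \<infinity> then \<infinity> else ennreal (enn2real x powr q))"

definition avgp :: "real \<Rightarrow> (complex \<Rightarrow> real) \<Rightarrow> complex set \<Rightarrow> (complex \<Rightarrow> real) \<Rightarrow> ennreal" where
  "avgp p v E f = epow (areaint E (\<lambda>z. ennreal (\<bar>f z\<bar> powr p * v z))) (1 / p) /
                  epow (areaint E (\<lambda>z. ennreal (v z))) (1 / p)"

text \<open><g>_{v,E} for a [0,infinity]-valued function (used for the maximal function);
  for real f, avgp 1 v E f agrees with wavg v E (|f|).\<close>
definition wavg :: "(complex \<Rightarrow> real) \<Rightarrow> complex set \<Rightarrow> (complex \<Rightarrow> ennreal) \<Rightarrow> ennreal" where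
  "wavg v E g = areaint E (\<lambda>z. g z * ennreal (v z)) / areaint E (\<lambda>z. ennreal (v z))"

definition dyadic_max :: "arc set \<Rightarrow> (complex \<Rightarrow> real) \<Rightarrow> (complex \<Rightarrow> real) \<Rightarrow> complex \<Rightarrow> ennreal" where
  "dyadic_max D v f z = (SUP I \<in> {I \<in> D. z \<in> Qbox I}. avgp 1 v (Qbox I) f)"

definition Binf_const :: "arc set \<Rightarrow> (complex \<Rightarrow> real) \<Rightarrow> (complex \<Rightarrow> real) \<Rightarrow> ennreal" where
  "Binf_const D v u = (SUP I \<in> D.
      wavg v (Qbox I) (dyadic_max D v (\<lambda>z. u z * indicator (Qbox I) z)) / avgp 1 v (Qbox I) u)"

definition in_Binf :: "(complex \<Rightarrow> real) \<Rightarrow> arc set \<Rightarrow> (complex \<Rightarrow> real) \<Rightarrow> bool" where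
  "in_Binf u D v \<longleftrightarrow> Binf_const D v u < \<infinity>"

end

theory Submission
  imports Defs
begin


lemma cis2pi_eq: "cis (2*pi*x) = cis (2*pi*y) \<longleftrightarrow> (\<exists>n::int. x = y + n)"
proof -
  have "cis (2*pi*x) = cis (2*pi*y) \<longleftrightarrow> sin (2*pi*x) = sin (2*pi*y) \<and> cos (2*pi*x) = cos (2*pi*y)"
    by (auto simp: complex_eq_iff)
  also have "\<dots> \<longleftrightarrow> (\<exists>n::int. 2*pi*x = 2*pi*y + 2*pi*n)" by (rule sin_cos_eq_iff)
  also have "\<dots> \<longleftrightarrow> (\<exists>n::int. x = y + n)"
  proof -
    have "2*pi*x = 2*pi*y + 2*pi*n \<longleftrightarrow> x = y + n" for n :: int
      proof -
        have "2*pi*y + 2*pi*n = 2*pi*(y+n)" by (simp add: algebra_simps)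
        then show ?thesis using pi_gt_zero by (metis mult_cancel_left mult_eq_0_iff less_irrefl zero_neq_numeral)
      qed
    then show ?thesis by simp
  qed
  finally show ?thesis .
qed

lemma cis2pi_int: "cis (2*pi*(x + of_int n)) = cis (2*pi*x)"
  using cis2pi_eq by auto

lemma cis2pi_int': "cis (2*pi*(x - of_int n)) = cis (2*pi*x)"
  using cis2pi_eq[of "x - of_int n" x] by (metis cis2pi_int diff_add_cancel)

lemma shift_lemma:
  fixes a L b M :: real
  assumes M: "0 < M" "M < 1" and L: "0 < L"
    and H: "\<And>x. a \<le> x \<Longrightarrow> x < a + L \<Longrightarrow> \<exists>y n. b \<le> y \<and> y < b + M \<and> x = y + of_int n"
  shows "\<exists>n::int. b + n \<le> a \<and> a + L \<le> b + M + n"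
proof -
  obtain y0 n where y0: "b \<le> y0" "y0 < b + M" "a = y0 + of_int n" using H[of a] L by auto
  have "a + L \<le> b + M + n"
  proof (rule ccontr)
    assume "\<not> ?thesis"
    hence "b + M + n < a + L" by simp
    moreover have "a \<le> b + M + n" using y0 by simp
    ultimately obtain y m where ym: "b \<le> y" "y < b + M" "b + M + n = y + of_int m" using H by blast
    hence "of_int (n - m) \<ge> - M" "of_int (n - m) < (0::real)" by auto
    hence "n - m \<ge> 0 \<or> n - m \<le> -1" by linarith
    with \<open>of_int (n - m) \<ge> - M\<close> \<open>of_int (n - m) < (0::real)\<close> M show False
      by (smt (verit) of_int_le_iff of_int_less_iff of_int_minus of_int_1 of_int_0)
  qed
  moreover have "b + n \<le> a" using y0 by simp
  ultimately show ?thesis by blast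
qed

lemma polar_any:
  fixes z :: complex
  shows "\<exists>\<theta>. z = complex_of_real (cmod z) * cis (2*pi*\<theta>) \<and> c - 1/2 \<le> \<theta> \<and> \<theta> < c + 1/2"
proof -
  define x where "x = Arg z / (2*pi)"
  have zx: "z = complex_of_real (cmod z) * cis (2*pi*x)"
    using rcis_cmod_Arg[of z] by (simp add: x_def rcis_def)
  define k where "k = \<lfloor>x - c + 1/2\<rfloor>"
  define \<theta> where "\<theta> = x - of_int k"
  have "z = complex_of_real (cmod z) * cis (2*pi*\<theta>)"
    using zx by (simp add: \<theta>_def cis2pi_int')
  moreover have "c - 1/2 \<le> \<theta> \<and> \<theta> < c + 1/2"
    unfolding \<theta>_def k_def
    using of_int_floor_le[of "x - c + 1/2"] real_of_int_floor_add_one_gt[of "x - c + 1/2"]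
    by linarith
  ultimately show ?thesis by blast
qed

lemma Qbox_full:
  assumes "snd I = 1"
  shows "Qbox I = ball 0 1"
proof
  show "Qbox I \<subseteq> ball 0 1" by (auto simp: Qbox_def)
  show "ball 0 1 \<subseteq> Qbox I"
  proof
    fix z :: complex assume "z \<in> ball 0 1"
    moreover obtain \<theta> where "z = complex_of_real (cmod z) * cis (2*pi*\<theta>)" "fst I - 1/2 \<le> \<theta>" "\<theta> < fst I + 1/2"
      using polar_any by blast
    moreover have "\<bar>\<theta> - fst I\<bar> \<le> 1/2" using calculation(3,4)
      unfolding abs_le_iff by linarith
    ultimately show "z \<in> Qbox I" using assms unfolding Qbox_def arclen_def
      by (intro CollectI conjI exI[of _ \<theta>]) auto
  qed
qed

lemma arc_setI: "fst I - snd I/2 \<le> \<theta> \<Longrightarrow> \<theta> < fst I + snd I/2 \<Longrightarrow> cis (2*pi*\<theta>) \<in> arc_set I"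
  unfolding arc_set_def by blast

lemma arc_setE: "w \<in> arc_set I \<Longrightarrow> (\<And>\<theta>. w = cis (2*pi*\<theta>) \<Longrightarrow> fst I - snd I/2 \<le> \<theta> \<Longrightarrow> \<theta> < fst I + snd I/2 \<Longrightarrow> P) \<Longrightarrow> P"
  unfolding arc_set_def by blast

lemma QboxI: "cmod z < 1 \<Longrightarrow> 1 - cmod z \<le> snd I \<Longrightarrow> z = complex_of_real (cmod z) * cis (2*pi*\<theta>) \<Longrightarrow>
   \<bar>\<theta> - fst I\<bar> \<le> snd I / 2 \<Longrightarrow> z \<in> Qbox I"
  unfolding Qbox_def arclen_def by blast

lemma QboxE: "z \<in> Qbox I \<Longrightarrow> (\<And>\<theta>. cmod z < 1 \<Longrightarrow> 1 - cmod z \<le> snd I \<Longrightarrow> z = complex_of_real (cmod z) * cis (2*pi*\<theta>) \<Longrightarrow>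
   \<bar>\<theta> - fst I\<bar> \<le> snd I / 2 \<Longrightarrow> P) \<Longrightarrow> P"
  unfolding Qbox_def arclen_def by blast

lemma Qbox_ball: "Qbox I \<subseteq> ball 0 1"
  by (auto elim: QboxE)

lemma Qbox_mono:
  assumes I: "0 < snd I" "snd I \<le> 1" and J: "0 < snd J" "snd J \<le> 1"
    and sub: "arc_set J \<subseteq> arc_set I"
  shows "Qbox J \<subseteq> Qbox I"
proof (cases "snd I = 1")
  case True
  then show ?thesis using Qbox_full[OF True] Qbox_ball by blast
next
  case False
  define c l d m where "c = fst I" "l = snd I" "d = fst J" "m = snd J"
  have l: "0 < l" "l < 1" using I False c_l_d_m_def by auto
  have m: "0 < m" "m \<le> 1" using J c_l_d_m_def by auto
  have H: "\<exists>y n. c - l/2 \<le> y \<and> y < c - l/2 + l \<and> x = y + of_int n"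
    if "d - m/2 \<le> x" "x < d - m/2 + m" for x
  proof -
    have "cis (2*pi*x) \<in> arc_set J" using that by (intro arc_setI) (auto simp: c_l_d_m_def)
    with sub have "cis (2*pi*x) \<in> arc_set I" by blast
    then obtain y where y: "cis (2*pi*x) = cis (2*pi*y)" "c - l/2 \<le> y" "y < c + l/2"
      by (auto simp: c_l_d_m_def elim!: arc_setE)
    then obtain n :: int where "x = y + n" using cis2pi_eq by blast
    then show ?thesis using y by (intro exI[of _ y] exI[of _ n]) simp
  qed
  obtain n :: int where n: "c - l/2 + n \<le> d - m/2" "d - m/2 + m \<le> c - l/2 + l + n"
    using shift_lemma[of l m "d - m/2" "c - l/2", OF l m(1) H] by blast
  show ?thesis
  proof
    fix z assume "z \<in> Qbox J"
    then obtain \<theta> where z: "cmod z < 1" "1 - cmod z \<le> m" "z = complex_of_real (cmod z) * cis (2*pi*\<theta>)"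
        "\<bar>\<theta> - d\<bar> \<le> m/2"
      by (auto simp: c_l_d_m_def elim!: QboxE)
    have "z = complex_of_real (cmod z) * cis (2*pi*(\<theta> - of_int n))"
      using z(3) by (simp add: cis2pi_int')
    moreover have "\<bar>(\<theta> - of_int n) - c\<bar> \<le> l/2" using z(4) n unfolding abs_le_iff by linarith
    moreover have "1 - cmod z \<le> l" using z(2) n by linarith
    ultimately show "z \<in> Qbox I" using z(1) by (intro QboxI) (auto simp: c_l_d_m_def)
  qed
qed

lemma segment_null: "closed_segment 0 (w::complex) \<in> null_sets lebesgue"
proof (cases "w = 0")
  case True
  then show ?thesis by (simp add: negligible_iff_null_sets[symmetric] negligible_sing)
next
  case False
  have "closed_segment 0 w \<subseteq> {x. (\<i> * w) \<bullet> x = 0}"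
    by (auto simp: in_segment inner_complex_def algebra_simps)
  moreover have "negligible {x. (\<i> * w) \<bullet> x = 0}"
    using False by (intro negligible_hyperplane) simp
  ultimately show ?thesis
    using negligible_subset negligible_iff_null_sets by blast
qed

lemma ray_in_segment: "cmod z \<le> 1 \<Longrightarrow> z = complex_of_real (cmod z) * w \<Longrightarrow> z \<in> closed_segment 0 w"
  unfolding in_segment by (intro conjI exI[of _ "cmod z"]) (auto simp: scaleR_conv_of_real)

lemma Qbox_disj_null:
  assumes disj: "arc_set I \<inter> arc_set J = {}"
  shows "Qbox I \<inter> Qbox J \<in> null_sets lebesgue"
proof -
  define c l d m where "c = fst I" "l = snd I" "d = fst J" "m = snd J"
  have "Qbox I \<inter> Qbox J \<subseteq> closed_segment 0 (cis (2*pi*(c + l/2))) \<union> closed_segment 0 (cis (2*pi*(d + m/2)))"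
  proof
    fix z assume zin: "z \<in> Qbox I \<inter> Qbox J"
    then obtain \<theta>1 \<theta>2 where z: "cmod z < 1" "z = complex_of_real (cmod z) * cis (2*pi*\<theta>1)"
        "\<bar>\<theta>1 - c\<bar> \<le> l/2" "z = complex_of_real (cmod z) * cis (2*pi*\<theta>2)" "\<bar>\<theta>2 - d\<bar> \<le> m/2"
      unfolding c_l_d_m_def by (auto elim!: QboxE)
    show "z \<in> closed_segment 0 (cis (2*pi*(c + l/2))) \<union> closed_segment 0 (cis (2*pi*(d + m/2)))"
    proof (cases "z = 0")
      case True then show ?thesis by simp
    next
      case False
      have "complex_of_real (cmod z) \<noteq> 0" using False by simp
      then have eqc: "cis (2*pi*\<theta>1) = cis (2*pi*\<theta>2)"
        using z(2,4) by (metis mult_cancel_left)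
      have "\<theta>1 = c + l/2 \<or> \<theta>2 = d + m/2"
      proof (rule ccontr)
        assume "\<not> ?thesis"
        then have "\<theta>1 < c + l/2" "\<theta>2 < d + m/2" using z(3,5) unfolding abs_le_iff by linarith+
        moreover have "c - l/2 \<le> \<theta>1" "d - m/2 \<le> \<theta>2" using z(3,5) unfolding abs_le_iff by linarith+
        ultimately have "cis (2*pi*\<theta>1) \<in> arc_set I" "cis (2*pi*\<theta>2) \<in> arc_set J"
          by (auto intro!: arc_setI simp: c_l_d_m_def)
        then show False using disj eqc by auto
      qed
      then show ?thesis
      proof
        assume "\<theta>1 = c + l/2"
        then have "z \<in> closed_segment 0 (cis (2*pi*(c + l/2)))"
          using z(1,2) by (intro ray_in_segment) auto
        then show ?thesis by blast
      next
        assume "\<theta>2 = d + m/2"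
        then have "z \<in> closed_segment 0 (cis (2*pi*(d + m/2)))"
          using z(1,4) by (intro ray_in_segment) auto
        then show ?thesis by blast
      qed
    qed
  qed
  moreover have "closed_segment 0 (cis (2*pi*(c + l/2))) \<union> closed_segment 0 (cis (2*pi*(d + m/2))) \<in> null_sets lebesgue"
    using segment_null by blast
  ultimately show ?thesis
    by (meson negligible_subset negligible_iff_null_sets)
qed

lemma Qbox_sets: "Qbox I \<in> sets lebesgue"
proof -
  define c l where "c = fst I" "l = snd I"
  define K where "K = (\<lambda>p. complex_of_real (fst p) * cis (2*pi*(snd p))) ` ({0..1} \<times> {c - l/2..c + l/2})"
  have "compact K"
    unfolding K_def by (intro compact_continuous_image compact_Times compact_Icc continuous_intros)
  have eq: "Qbox I = K \<inter> ball 0 1 \<inter> {z. 1 - cmod z \<le> l}"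
  proof (intro equalityI subsetI)
    fix z assume "z \<in> Qbox I"
    then obtain \<theta> where z: "cmod z < 1" "1 - cmod z \<le> l" "z = complex_of_real (cmod z) * cis (2*pi*\<theta>)"
        "\<bar>\<theta> - c\<bar> \<le> l/2"
      unfolding c_l_def by (auto elim!: QboxE)
    have "(cmod z, \<theta>) \<in> {0..1} \<times> {c - l/2..c + l/2}" using z(1,4) unfolding abs_le_iff by auto
    then have "z \<in> K" unfolding K_def using z(3) by (intro image_eqI[of _ _ "(cmod z, \<theta>)"]) auto
    then show "z \<in> K \<inter> ball 0 1 \<inter> {z. 1 - cmod z \<le> l}" using z by auto
  next
    fix z assume "z \<in> K \<inter> ball 0 1 \<inter> {z. 1 - cmod z \<le> l}"
    then obtain r \<theta> where z: "z = complex_of_real r * cis (2*pi*\<theta>)" "0 \<le> r" "r \<le> 1" "c - l/2 \<le> \<theta>" "\<theta> \<le> c + l/2"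
      "cmod z < 1" "1 - cmod z \<le> l"
      unfolding K_def by auto
    have "cmod z = r" using z(1,2) by (simp add: norm_mult)
    moreover have "\<bar>\<theta> - c\<bar> \<le> l/2" using z(4,5) unfolding abs_le_iff by linarith
    ultimately show "z \<in> Qbox I" using z unfolding c_l_def
      by (intro QboxI[of _ _ \<theta>]) auto
  qed
  have "closed {z::complex. 1 - cmod z \<le> l}"
    by (intro closed_Collect_le continuous_intros)
  moreover have "K \<in> sets borel" using \<open>compact K\<close> by (intro borel_closed compact_imp_closed)
  moreover have "ball (0::complex) 1 \<in> sets borel" by (intro borel_open) simp
  ultimately have "Qbox I \<in> sets borel"
    unfolding eq by (meson sets.Int borel_closed)
  then show ?thesis by simp
qed

lemma TboxI: "cmod z < 1 \<Longrightarrow> snd I / 2 < 1 - cmod z \<Longrightarrow> 1 - cmod z \<le> snd I \<Longrightarrow>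
   z = complex_of_real (cmod z) * cis (2*pi*\<theta>) \<Longrightarrow>
   fst I - snd I / 2 \<le> \<theta> \<Longrightarrow> \<theta> < fst I + snd I / 2 \<Longrightarrow> z \<in> Tbox I"
  unfolding Tbox_def arclen_def by blast

lemma Tbox_interior:
  assumes "0 < snd I" "snd I \<le> 1"
  shows "interior (Tbox I) \<noteq> {}"
proof -
  define c l where "c = fst I" "l = snd I"
  have l: "0 < l" "l \<le> 1" using assms c_l_def by auto
  define g where "g = (\<lambda>z. z * cis (-(2*pi*c)))"
  define W where "W = Arg -` {-(pi*l)<..<pi*l} \<inter> (- \<real>\<^sub>\<le>\<^sub>0)"
  have "open W"
    using continuous_on_Arg unfolding W_def
    by (subst (asm) continuous_on_open_vimage) auto
  have "open (g -` W)"
    unfolding g_def by (intro continuous_open_vimage \<open>open W\<close> continuous_intros)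
  define Op where "Op = {z. 1 - l < cmod z \<and> cmod z < 1 - l/2} \<inter> g -` W"
  have "open Op"
    unfolding Op_def
    by (intro open_Int \<open>open (g -` W)\<close> open_Collect_conj open_Collect_less continuous_intros)
  define r0 where "r0 = 1 - 3*l/4"
  have r0: "0 < r0" using l unfolding r0_def by simp
  define z0 where "z0 = complex_of_real r0 * cis (2*pi*c)"
  have gz0: "g z0 = complex_of_real r0"
    unfolding g_def z0_def by (simp add: mult.assoc cis_mult)
  have "z0 \<in> Op"
  proof -
    have "cmod z0 = r0" using r0 unfolding z0_def norm_mult norm_of_real by simp
    moreover have "g z0 \<in> W" unfolding gz0 W_def using l r0 pi_gt_zero
      by (auto simp: complex_nonpos_Reals_iff)
    ultimately show ?thesis unfolding Op_def using l by (auto simp: r0_def)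
  qed
  have "Op \<subseteq> Tbox I"
  proof
    fix z assume zO: "z \<in> Op"
    define w where "w = g z"
    have w: "w \<in> W" using zO unfolding Op_def w_def by auto
    have cw: "cmod w = cmod z" unfolding w_def g_def by (simp add: norm_mult)
    have zw: "z = w * cis (2*pi*c)" unfolding w_def g_def by (simp add: mult.assoc cis_mult)
    have wpolar: "w = complex_of_real (cmod w) * cis (Arg w)"
      using rcis_cmod_Arg[of w] by (simp add: rcis_def)
    define \<theta> where "\<theta> = c + Arg w / (2*pi)"
    have "cis (2*pi*\<theta>) = cis (Arg w) * cis (2*pi*c)"
      unfolding \<theta>_def by (simp add: cis_mult algebra_simps)
    then have "z = complex_of_real (cmod z) * cis (2*pi*\<theta>)"
      using zw wpolar cw by (metis mult.assoc)
    moreover have "\<bar>Arg w\<bar> < pi * l" using w unfolding W_def by auto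
    then have "c - l/2 \<le> \<theta>" "\<theta> < c + l/2"
      unfolding \<theta>_def using pi_gt_zero by (auto simp: field_simps abs_less_iff)
    moreover have "1 - l < cmod z" "cmod z < 1 - l/2" using zO unfolding Op_def by auto
    ultimately show "z \<in> Tbox I" using l unfolding c_l_def
      by (intro TboxI[of _ _ \<theta>]) auto
  qed
  then have "Op \<subseteq> interior (Tbox I)" using \<open>open Op\<close> by (rule interior_maximal)
  then show ?thesis using \<open>z0 \<in> Op\<close> by auto
qed

lemma dyadic_countable:
  assumes "dyadic_grid D"
  shows "countable D"
proof -
  have len: "\<And>I. I \<in> D \<Longrightarrow> 0 < snd I \<and> snd I \<le> 1" using assms unfolding dyadic_grid_def arclen_def by auto
  have disj: "\<And>I J. I \<in> D \<Longrightarrow> J \<in> D \<Longrightarrow> I \<noteq> J \<Longrightarrow> Tbox I \<inter> Tbox J = {}"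
    using assms unfolding dyadic_grid_def by blast
  have ne: "\<And>I. I \<in> D \<Longrightarrow> Tbox I \<noteq> {}"
    using Tbox_interior len interior_subset by blast
  have "countable (Tbox ` D)"
  proof (rule countable_disjoint_nonempty_interior_subsets)
    show "pairwise disjnt (Tbox ` D)"
      unfolding pairwise_def disjnt_def using disj by (metis imageE)
    show "\<And>S. S \<in> Tbox ` D \<Longrightarrow> interior S = {} \<Longrightarrow> S = {}"
      using Tbox_interior len by blast
  qed
  moreover have "inj_on Tbox D"
    unfolding inj_on_def using disj ne by (metis inf.idem)
  ultimately show ?thesis by (rule countable_image_inj_on)
qed



lemma geo_tail_sum:
  fixes A :: real and m0 :: nat
  assumes "0 \<le> A"
  shows "(\<Sum>k. ennreal (if m0 \<le> k then A * (1/2)^k else 0)) = ennreal (2 * A * (1/2)^m0)"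
proof -
  define g where "g = (\<lambda>k::nat. if m0 \<le> k then A * (1/2)^k else 0)"
  have "(\<lambda>i. (1/2::real)^i) sums (1 / (1 - 1/2))" by (rule geometric_sums) simp
  then have "(\<lambda>i. (A * (1/2)^m0) * (1/2::real)^i) sums ((A * (1/2)^m0) * 2)"
    using sums_mult by fastforce
  moreover have "(\<lambda>i. g (i + m0)) = (\<lambda>i. (A * (1/2)^m0) * (1/2::real)^i)"
    by (auto simp: g_def power_add fun_eq_iff)
  ultimately have "(\<lambda>i. g (i + m0)) sums ((A * (1/2)^m0) * 2)" by simp
  then have "g sums ((A * (1/2)^m0) * 2 + (\<Sum>i<m0. g i))" by (simp add: sums_iff_shift)
  moreover have "(\<Sum>i<m0. g i) = 0" by (simp add: g_def)
  ultimately have "g sums (2 * A * (1/2)^m0)" by (simp add: mult_ac)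
  moreover have "\<And>k. 0 \<le> g k" using assms by (simp add: g_def)
  ultimately have "(\<Sum>k. ennreal (g k)) = ennreal (2 * A * (1/2)^m0)" by (intro suminf_ennreal_eq)
  then show ?thesis by (simp add: g_def)
qed

lemma level_sum_eq:
  fixes A t :: real
  assumes A: "0 < A" and t: "0 < t"
  defines "m0 \<equiv> LEAST k. A * (1/2::real)^k < t"
  shows "(\<Sum>k. ennreal (if A * (1/2)^k < t then A * (1/2)^k else 0)) = ennreal (2 * A * (1/2)^m0)"
    and "A * (1/2)^m0 < t"
    and "0 < m0 \<Longrightarrow> t \<le> A * (1/2)^(m0 - 1)"
proof -
  obtain N where N: "(1/2::real)^N < t / A" using real_arch_pow_inv[of "t/A" "1/2"] A t by auto
  then have ex: "A * (1/2::real)^N < t" using A by (simp add: pos_less_divide_eq mult.commute)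
  show lt: "A * (1/2)^m0 < t" unfolding m0_def by (rule LeastI[of _ N]) (rule ex)
  have iff: "A * (1/2::real)^k < t \<longleftrightarrow> m0 \<le> k" for k
  proof
    assume "A * (1/2::real)^k < t" then show "m0 \<le> k" unfolding m0_def by (rule Least_le)
  next
    assume "m0 \<le> k"
    then have "(1/2::real)^k \<le> (1/2)^m0" by (rule power_decreasing) auto
    then have "A * (1/2::real)^k \<le> A * (1/2)^m0" using A by (intro mult_left_mono) auto
    then show "A * (1/2::real)^k < t" using lt by linarith
  qed
  show "(\<Sum>k. ennreal (if A * (1/2)^k < t then A * (1/2)^k else 0)) = ennreal (2 * A * (1/2)^m0)"
  proof -
    have eq: "(\<lambda>k. ennreal (if A * (1/2)^k < t then A * (1/2)^k else 0)) = (\<lambda>k. ennreal (if m0 \<le> k then A * (1/2)^k else 0))"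
      by (rule ext) (simp only: iff)
    have "0 \<le> A" using A by simp
    from geo_tail_sum[OF this, of m0] show ?thesis by (simp only: eq)
  qed
  show "t \<le> A * (1/2)^(m0 - 1)" if "0 < m0"
  proof -
    have "\<not> A * (1/2::real)^(m0 - 1) < t"
      using iff[of "m0 - 1"] that by simp
    then show ?thesis by simp
  qed
qed

lemma level_sum_upper:
  fixes A t :: real
  assumes A: "0 < A"
  shows "(\<Sum>k. ennreal (if A * (1/2)^k < t then A * (1/2)^k else 0)) \<le> ennreal (2 * t)"
proof (cases "0 < t")
  case True
  note L = level_sum_eq[OF A True]
  show ?thesis unfolding L(1) using L(2) by (intro ennreal_leI) simp
next
  case False
  have "\<And>k. 0 < A * (1/2::real)^k" using A by simp
  then have "\<And>k. \<not> A * (1/2::real)^k < t" using False by (meson less_trans not_less)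
  then show ?thesis by simp
qed

lemma level_sum_lower:
  fixes A t :: real
  assumes A: "0 < A" and t: "t \<le> A"
  shows "ennreal t \<le> (\<Sum>k. ennreal (if A * (1/2)^k < t then A * (1/2)^k else 0))"
proof (cases "0 < t")
  case True
  define m0 where "m0 = (LEAST k. A * (1/2::real)^k < t)"
  note L = level_sum_eq[OF A True, folded m0_def]
  have "0 < m0"
  proof (rule ccontr)
    assume "\<not> 0 < m0" then have "m0 = 0" by simp
    then show False using L(2) t by simp
  qed
  then have "t \<le> A * (1/2)^(m0 - 1)" by (rule L(3))
  also have "A * (1/2)^(m0 - 1) = 2 * A * (1/2)^m0"
  proof -
    obtain j where "m0 = Suc j" using \<open>0 < m0\<close> gr0_implies_Suc by blast
    then show ?thesis by simp
  qed
  finally show ?thesis unfolding L(1) by (intro ennreal_leI)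
next
  case False
  then have "ennreal t = 0" by (intro ennreal_neg) simp
  then show ?thesis by simp
qed

lemma null_union_add:
  assumes "A \<in> sets M" "B \<in> sets M" "A \<inter> B \<in> null_sets M"
  shows "emeasure M (A \<union> B) = emeasure M A + emeasure M B"
proof -
  have "emeasure M (A \<union> B) = emeasure M (A \<union> (B - A))" by (simp add: Un_Diff_cancel)
  also have "\<dots> = emeasure M A + emeasure M (B - A)"
    using assms by (subst plus_emeasure) auto
  also have "emeasure M (B - A) = emeasure M B"
  proof -
    have "emeasure M B = emeasure M ((B - A) \<union> (B \<inter> A))" by (simp add: Un_Diff_Int)
    also have "\<dots> = emeasure M (B - A)"
      using assms by (intro emeasure_Un_null_set) (auto simp: Int_commute)
    finally show ?thesis by simp
  qed
  finally show ?thesis .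
qed

lemma union_ineq:
  assumes "finite G"
  shows "G \<subseteq> sets M \<Longrightarrow> E \<in> sets M \<Longrightarrow>
    (\<forall>B\<in>G. \<forall>B'\<in>G. B \<subseteq> B' \<or> B' \<subseteq> B \<or> B \<inter> B' \<in> null_sets M) \<Longrightarrow>
    (\<forall>B\<in>G. emeasure M B \<le> c * emeasure M (B \<inter> E)) \<Longrightarrow>
    emeasure M (\<Union>G) \<le> c * emeasure M (\<Union>G \<inter> E)"
  using assms
proof (induction G rule: finite_psubset_induct)
  case (psubset G)
  show ?case
  proof (cases "G = {}")
    case True then show ?thesis by simp
  next
    case False
    obtain B0 where B0: "B0 \<in> G" "\<forall>b\<in>G. B0 \<subseteq> b \<longrightarrow> B0 = b"
      using finite_has_maximal[OF psubset.hyps(1) False] by auto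
    define G2 where "G2 = {B \<in> G. \<not> B \<subseteq> B0}"
    have sub: "G2 \<subset> G" using B0 by (auto simp: G2_def)
    have finG2: "finite G2" using psubset.hyps(1) sub by (auto intro: finite_subset)
    have IH: "emeasure M (\<Union>G2) \<le> c * emeasure M (\<Union>G2 \<inter> E)"
    proof (rule psubset.IH[OF sub])
      have G2G: "G2 \<subseteq> G" using sub by blast
      show "G2 \<subseteq> sets M" using G2G psubset.prems(1) by blast
      show "E \<in> sets M" by (rule psubset.prems(2))
      show "\<forall>B\<in>G2. \<forall>B'\<in>G2. B \<subseteq> B' \<or> B' \<subseteq> B \<or> B \<inter> B' \<in> null_sets M"
        using G2G psubset.prems(3) by blast
      show "\<forall>B\<in>G2. emeasure M B \<le> c * emeasure M (B \<inter> E)"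
        using G2G psubset.prems(4) by blast
    qed
    have unionG: "\<Union>G = B0 \<union> \<Union>G2" using B0 by (auto simp: G2_def)
    have G2s: "\<Union>G2 \<in> sets M" using finG2 sub psubset.prems(1) by (intro sets.finite_Union) auto
    have B0s: "B0 \<in> sets M" using B0 psubset.prems(1) by auto
    have nullB: "B0 \<inter> B \<in> null_sets M" if "B \<in> G2" for B
    proof -
      have "B \<in> G" "\<not> B \<subseteq> B0" using that by (auto simp: G2_def)
      moreover have "\<not> B0 \<subseteq> B" using B0 \<open>B \<in> G\<close> \<open>\<not> B \<subseteq> B0\<close> by auto
      ultimately show ?thesis using psubset.prems(3) B0(1) by (metis Int_commute)
    qed
    have null: "B0 \<inter> \<Union>G2 \<in> null_sets M"
    proof -
      have "B0 \<inter> \<Union>G2 = (\<Union>B\<in>G2. B0 \<inter> B)" by auto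
      also have "\<dots> \<in> null_sets M" using finG2 nullB by (intro null_sets.finite_UN) auto
      finally show ?thesis .
    qed
    have Es: "E \<in> sets M" by (rule psubset.prems(2))
    have null2: "(B0 \<inter> E) \<inter> (\<Union>G2 \<inter> E) \<in> null_sets M"
      by (rule null_sets_subset[OF null]) (use B0s G2s Es in auto)
    have "emeasure M (\<Union>G) = emeasure M B0 + emeasure M (\<Union>G2)"
      unfolding unionG by (rule null_union_add[OF B0s G2s null])
    also have "\<dots> \<le> c * emeasure M (B0 \<inter> E) + c * emeasure M (\<Union>G2 \<inter> E)"
      using psubset.prems(4) B0(1) IH by (intro add_mono) auto
    also have "\<dots> = c * (emeasure M (B0 \<inter> E) + emeasure M (\<Union>G2 \<inter> E))"
      by (simp add: distrib_left)
    also have "emeasure M (B0 \<inter> E) + emeasure M (\<Union>G2 \<inter> E) = emeasure M ((B0 \<inter> E) \<union> (\<Union>G2 \<inter> E))"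
      using B0s G2s Es null2 by (intro null_union_add[symmetric]) auto
    also have "(B0 \<inter> E) \<union> (\<Union>G2 \<inter> E) = \<Union>G \<inter> E" unfolding unionG by auto
    finally show ?thesis .
  qed
qed

lemma max_ineq:
  fixes M :: "'a measure" and f :: "'a \<Rightarrow> real" and G :: "'a set set" and a :: "'a set \<Rightarrow> real"
    and c :: ennreal and \<epsilon> :: real
  assumes fm: "f \<in> borel_measurable M" and finG: "finite G" and Gs: "G \<subseteq> sets M"
    and tri: "\<forall>B\<in>G. \<forall>B'\<in>G. B \<subseteq> B' \<or> B' \<subseteq> B \<or> B \<inter> B' \<in> null_sets M"
    and apos: "\<forall>B\<in>G. 0 \<le> a B" and eps: "0 < \<epsilon>"
    and key: "\<forall>B\<in>G. 0 < a B \<longrightarrow> emeasure M B \<le> c * emeasure M (B \<inter> {x \<in> space M. \<epsilon> * a B < f x})"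
  shows "(\<integral>\<^sup>+x. (SUP B\<in>{B\<in>G. x \<in> B}. ennreal (a B)) \<partial>M) \<le> c * (\<integral>\<^sup>+x. ennreal (2 * f x / \<epsilon>) \<partial>M)"
proof (cases "\<exists>B\<in>G. 0 < a B")
  case False
  then have "\<And>x. (SUP B\<in>{B\<in>G. x \<in> B}. ennreal (a B)) = 0"
    using apos by (intro antisym SUP_least) (auto simp: ennreal_neg not_less)
  then show ?thesis by simp
next
  case True
  then have Gne: "G \<noteq> {}" by auto
  define A where "A = Max (a ` G)"
  have aleA: "\<And>B. B \<in> G \<Longrightarrow> a B \<le> A" unfolding A_def using finG by simp
  have A: "0 < A" using True aleA by force
  define lam where "lam = (\<lambda>k::nat. A * (1/2::real)^k)"
  have lam_pos: "\<And>k. 0 < lam k" using A by (simp add: lam_def)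
  define Om where "Om = (\<lambda>k. \<Union>{B\<in>G. lam k < a B})"
  define E where "E = (\<lambda>k. {x \<in> space M. \<epsilon> * lam k < f x})"
  have Oms: "\<And>k. Om k \<in> sets M" unfolding Om_def using finG Gs by (intro sets.finite_Union) auto
  have Es: "\<And>k. E k \<in> sets M" unfolding E_def using fm by measurable
  have P1: "(SUP B\<in>{B\<in>G. x \<in> B}. ennreal (a B)) \<le> (\<Sum>k. ennreal (lam k) * indicator (Om k) x)" for x
  proof (rule SUP_least)
    fix B assume B: "B \<in> {B\<in>G. x \<in> B}"
    have "ennreal (a B) \<le> (\<Sum>k. ennreal (if A * (1/2)^k < a B then A * (1/2)^k else 0))"
      using level_sum_lower[OF A aleA] B by auto
    also have "\<dots> \<le> (\<Sum>k. ennreal (lam k) * indicator (Om k) x)"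
    proof (intro suminf_le summableI)
      fix k
      show "ennreal (if A * (1/2)^k < a B then A * (1/2)^k else 0) \<le> ennreal (lam k) * indicator (Om k) x"
      proof (cases "A * (1/2)^k < a B")
        case True
        then have "x \<in> Om k" using B unfolding Om_def lam_def by auto
        then show ?thesis using True by (simp add: lam_def)
      next
        case False then show ?thesis by simp
      qed
    qed
    finally show "ennreal (a B) \<le> (\<Sum>k. ennreal (lam k) * indicator (Om k) x)" .
  qed
  have P3: "emeasure M (Om k) \<le> c * emeasure M (E k)" for k
  proof -
    define Gk where "Gk = {B\<in>G. lam k < a B}"
    have "emeasure M (\<Union>Gk) \<le> c * emeasure M (\<Union>Gk \<inter> E k)"
    proof (rule union_ineq)
      show "finite Gk" using finG by (simp add: Gk_def)
      show "Gk \<subseteq> sets M" using Gs by (auto simp: Gk_def)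
      show "E k \<in> sets M" by (rule Es)
      show "\<forall>B\<in>Gk. \<forall>B'\<in>Gk. B \<subseteq> B' \<or> B' \<subseteq> B \<or> B \<inter> B' \<in> null_sets M" using tri by (auto simp: Gk_def)
      show "\<forall>B\<in>Gk. emeasure M B \<le> c * emeasure M (B \<inter> E k)"
      proof
        fix B assume B: "B \<in> Gk"
        then have "0 < a B" "B \<in> G" using lam_pos[of k] by (auto simp: Gk_def)
        then have "emeasure M B \<le> c * emeasure M (B \<inter> {x \<in> space M. \<epsilon> * a B < f x})" using key by blast
        also have "\<dots> \<le> c * emeasure M (B \<inter> E k)"
        proof (intro mult_left_mono emeasure_mono)
          show "B \<inter> {x \<in> space M. \<epsilon> * a B < f x} \<subseteq> B \<inter> E k"
          proof
            fix x assume x: "x \<in> B \<inter> {x \<in> space M. \<epsilon> * a B < f x}"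
            have "\<epsilon> * lam k < \<epsilon> * a B" using B eps by (simp add: Gk_def)
            then show "x \<in> B \<inter> E k" using x by (auto simp: E_def)
          qed
          show "B \<inter> E k \<in> sets M" using \<open>B \<in> G\<close> Gs Es by blast
        qed simp
        finally show "emeasure M B \<le> c * emeasure M (B \<inter> E k)" .
      qed
    qed
    also have "\<dots> \<le> c * emeasure M (E k)"
      by (intro mult_left_mono emeasure_mono) (auto simp: Es)
    finally show ?thesis unfolding Om_def Gk_def by simp
  qed
  have P4: "(\<Sum>k. ennreal (lam k) * indicator (E k) x) \<le> ennreal (2 * f x / \<epsilon>)" if x: "x \<in> space M" for x
  proof -
    have "(\<Sum>k. ennreal (lam k) * indicator (E k) x) = (\<Sum>k. ennreal (if A * (1/2)^k < f x / \<epsilon> then A * (1/2)^k else 0))"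
    proof (rule suminf_cong)
      fix k
      have "\<epsilon> * lam k < f x \<longleftrightarrow> A * (1/2)^k < f x / \<epsilon>"
        using eps by (simp add: lam_def pos_less_divide_eq mult.commute)
      then show "ennreal (lam k) * indicator (E k) x = ennreal (if A * (1/2)^k < f x / \<epsilon> then A * (1/2)^k else 0)"
        using x by (auto simp: E_def lam_def indicator_def)
    qed
    also have "\<dots> \<le> ennreal (2 * (f x / \<epsilon>))" by (rule level_sum_upper[OF A])
    finally show ?thesis by simp
  qed
  have "(\<integral>\<^sup>+x. (SUP B\<in>{B\<in>G. x \<in> B}. ennreal (a B)) \<partial>M) \<le> (\<integral>\<^sup>+x. (\<Sum>k. ennreal (lam k) * indicator (Om k) x) \<partial>M)"
    by (intro nn_integral_mono P1)
  also have "\<dots> = (\<Sum>k. \<integral>\<^sup>+x. ennreal (lam k) * indicator (Om k) x \<partial>M)"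
    using Oms by (intro nn_integral_suminf) auto
  also have "\<dots> = (\<Sum>k. ennreal (lam k) * emeasure M (Om k))"
    using Oms by (simp add: nn_integral_cmult_indicator)
  also have "\<dots> \<le> (\<Sum>k. c * (ennreal (lam k) * emeasure M (E k)))"
  proof (intro suminf_le summableI)
    fix k
    have "ennreal (lam k) * emeasure M (Om k) \<le> ennreal (lam k) * (c * emeasure M (E k))"
      by (intro mult_left_mono P3) simp
    then show "ennreal (lam k) * emeasure M (Om k) \<le> c * (ennreal (lam k) * emeasure M (E k))"
      by (simp add: mult_ac)
  qed
  also have "\<dots> = c * (\<Sum>k. ennreal (lam k) * emeasure M (E k))" by simp
  also have "(\<Sum>k. ennreal (lam k) * emeasure M (E k)) = (\<Sum>k. \<integral>\<^sup>+x. ennreal (lam k) * indicator (E k) x \<partial>M)"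
    using Es by (simp add: nn_integral_cmult_indicator)
  also have "\<dots> = (\<integral>\<^sup>+x. (\<Sum>k. ennreal (lam k) * indicator (E k) x) \<partial>M)"
    using Es by (intro nn_integral_suminf[symmetric]) auto
  also have "\<dots> \<le> (\<integral>\<^sup>+x. ennreal (2 * f x / \<epsilon>) \<partial>M)"
    by (intro nn_integral_mono P4)
  finally show ?thesis by (simp add: mult_left_mono)
qed

lemma young_pointwise:
  fixes y K s \<epsilon> \<eta> :: real
  assumes y: "0 \<le> y" and s: "0 < s" "s < 1" and K: "0 < K" and eps: "0 < \<epsilon>" and eta: "0 < \<eta>"
    and epsK: "\<epsilon> powr s = 1/(4*K)" and etaK: "\<eta> powr (1-s) = 1/(4*K)"
  shows "K * y powr s \<le> 1/4 + s/4 * y + (if \<epsilon> < y then (1-s)/(4*\<eta>) else 0)"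
proof (cases "\<epsilon> < y")
  case False
  then have "y powr s \<le> \<epsilon> powr s" using y s by (intro powr_mono2) auto
  then have "K * y powr s \<le> K * (1/(4*K))" using K epsK by (intro mult_left_mono) auto
  also have "\<dots> = 1/4" using K by simp
  moreover have "0 \<le> s/4 * y" using s y by simp
  ultimately show ?thesis using False by simp
next
  case True
  then have ypos: "0 < y" using eps by simp
  have "y powr s * (1/\<eta>) powr (1-s) \<le> s * y + (1-s) * (1/\<eta>)"
    using Youngs_inequality_0[of s "1-s" y "1/\<eta>"] s ypos eta by simp
  moreover have "(1/\<eta>) powr (1-s) = 4*K"
    using etaK eta K by (simp add: powr_divide)
  ultimately have "y powr s * (4*K) \<le> s * y + (1-s) / \<eta>" by simp
  then have "(y powr s * (4*K)) / 4 \<le> (s * y + (1-s) / \<eta>) / 4" by (rule divide_right_mono) simp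
  moreover have "(y powr s * (4*K)) / 4 = K * y powr s" by simp
  moreover have "(s * y + (1-s) / \<eta>) / 4 = s/4 * y + (1-s)/(4*\<eta>)" by (simp add: add_divide_distrib)
  ultimately have "K * y powr s \<le> s/4 * y + (1-s)/(4*\<eta>)" by simp
  then show ?thesis using True by simp
qed

lemma ennreal_split3:
  fixes p q y r :: real
  assumes "0 \<le> p" "0 \<le> q" "0 \<le> y" "0 \<le> r"
  shows "ennreal (p + q*y + r) = ennreal p + ennreal q * ennreal y + ennreal r"
proof -
  have "0 \<le> q*y" using assms by simp
  then have "0 \<le> p + q*y" using assms by simp
  then have "ennreal (p + q*y + r) = ennreal (p + q*y) + ennreal r" using ennreal_plus[OF _ assms(4)] by blast
  also have "ennreal (p + q*y) = ennreal p + ennreal (q*y)" using ennreal_plus[OF assms(1) \<open>0 \<le> q*y\<close>] .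
  also have "ennreal (q*y) = ennreal q * ennreal y" using ennreal_mult[OF assms(2,3)] .
  finally show ?thesis .
qed

lemma ennreal_lin3:
  fixes p x q y r z :: real
  assumes "0 \<le> p" "0 \<le> x" "0 \<le> q" "0 \<le> y" "0 \<le> r" "0 \<le> z"
  shows "ennreal (p*x + q*y + r*z) = ennreal p * ennreal x + ennreal q * ennreal y + ennreal r * ennreal z"
proof -
  have h: "0 \<le> p*x" "0 \<le> q*y" "0 \<le> r*z" using assms by simp_all
  then have "0 \<le> p*x + q*y" by simp
  then have "ennreal (p*x + q*y + r*z) = ennreal (p*x + q*y) + ennreal (r*z)" using ennreal_plus[OF _ h(3)] by blast
  also have "ennreal (p*x + q*y) = ennreal (p*x) + ennreal (q*y)" using ennreal_plus[OF h(1,2)] .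
  also have "ennreal (p*x) = ennreal p * ennreal x" using ennreal_mult[OF assms(1,2)] .
  also have "ennreal (q*y) = ennreal q * ennreal y" using ennreal_mult[OF assms(3,4)] .
  also have "ennreal (r*z) = ennreal r * ennreal z" using ennreal_mult[OF assms(5,6)] .
  finally show ?thesis .
qed

lemma box_ineq:
  fixes M :: "'a measure" and f :: "'a \<Rightarrow> real" and B :: "'a set" and a v K s \<epsilon> \<eta> :: real
  assumes fm: "f \<in> borel_measurable M" and fnn: "\<And>x. 0 \<le> f x" and Bs: "B \<in> sets M"
    and s: "0 < s" "s < 1" and K: "0 < K" and eps: "0 < \<epsilon>" and eta: "0 < \<eta>"
    and epsK: "\<epsilon> powr s = 1/(4*K)" and etaK: "\<eta> powr (1-s) = 1/(4*K)" and a: "0 < a"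
    and v: "0 \<le> v" and V: "emeasure M B = ennreal v"
    and U: "(\<integral>\<^sup>+x. ennreal (f x) * indicator B x \<partial>M) = ennreal (a * v)"
    and hyp: "ennreal v \<le> ennreal K * (\<integral>\<^sup>+x. ennreal ((f x / a) powr s) * indicator B x \<partial>M)"
  shows "emeasure M B \<le> ennreal ((1-s)/(2*\<eta>)) * emeasure M (B \<inter> {x\<in>space M. \<epsilon> * a < f x})"
proof -
  define F where "F = B \<inter> {x\<in>space M. \<epsilon> * a < f x}"
  have Fs: "F \<in> sets M" unfolding F_def using Bs fm by measurable
  have "emeasure M F \<le> emeasure M B" unfolding F_def using Bs by (intro emeasure_mono) auto
  then have "emeasure M F \<noteq> \<infinity>" using V by (auto simp: top_unique)
  define w where "w = enn2real (emeasure M F)"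
  have w: "emeasure M F = ennreal w" "0 \<le> w"
    using \<open>emeasure M F \<noteq> \<infinity>\<close> unfolding w_def by (auto simp: ennreal_enn2real_if)
  define c where "c = (1-s)/(4*\<eta>)"
  have c: "0 \<le> c" using s eta by (simp add: c_def)
  have pw: "ennreal K * (ennreal ((f x / a) powr s) * indicator B x)
      \<le> ennreal (1/4) * indicator B x + ennreal (s/4) * (ennreal (f x / a) * indicator B x) + ennreal c * indicator F x"
    if x: "x \<in> space M" for x
  proof (cases "x \<in> B")
    case False
    then have "x \<notin> F" by (simp add: F_def)
    then show ?thesis using False by simp
  next
    case True
    have y: "0 \<le> f x / a" using fnn a by simp
    have ind: "(\<epsilon> < f x / a) \<longleftrightarrow> x \<in> F"
      using True x a by (simp add: F_def pos_less_divide_eq)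
    have "K * (f x / a) powr s \<le> 1/4 + s/4 * (f x / a) + (if \<epsilon> < f x / a then c else 0)"
      unfolding c_def by (rule young_pointwise[OF y s K eps eta epsK etaK])
    then have "ennreal (K * (f x / a) powr s) \<le> ennreal (1/4 + s/4 * (f x / a) + (if \<epsilon> < f x / a then c else 0))"
      by (rule ennreal_leI)
    also have "\<dots> = ennreal (1/4) + ennreal (s/4) * ennreal (f x / a) + ennreal (if \<epsilon> < f x / a then c else 0)"
      using s y c by (intro ennreal_split3) auto
    finally have *: "ennreal (K * (f x / a) powr s) \<le> ennreal (1/4) + ennreal (s/4) * ennreal (f x / a) + ennreal (if \<epsilon> < f x / a then c else 0)" .
    have "ennreal K * ennreal ((f x / a) powr s) = ennreal (K * (f x / a) powr s)" using K by (simp add: ennreal_mult)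
    moreover have "ennreal (if \<epsilon> < f x / a then c else 0) = ennreal c * indicator F x"
      using ind by (simp add: indicator_def)
    ultimately show ?thesis using True * by simp
  qed
  have "ennreal v \<le> ennreal K * (\<integral>\<^sup>+x. ennreal ((f x / a) powr s) * indicator B x \<partial>M)" by (rule hyp)
  also have "\<dots> = (\<integral>\<^sup>+x. ennreal K * (ennreal ((f x / a) powr s) * indicator B x) \<partial>M)"
  proof (rule nn_integral_cmult[symmetric])
    show "(\<lambda>x. ennreal ((f x / a) powr s) * indicator B x) \<in> borel_measurable M"
      using Bs fm by measurable
  qed
  also have "\<dots> \<le> (\<integral>\<^sup>+x. ennreal (1/4) * indicator B x + ennreal (s/4) * (ennreal (f x / a) * indicator B x) + ennreal c * indicator F x \<partial>M)"
    by (intro nn_integral_mono pw)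
  also have "\<dots> = (\<integral>\<^sup>+x. ennreal (1/4) * indicator B x \<partial>M) + (\<integral>\<^sup>+x. ennreal (s/4) * (ennreal (f x / a) * indicator B x) \<partial>M)
      + (\<integral>\<^sup>+x. ennreal c * indicator F x \<partial>M)"
    using Bs Fs fm by (simp add: nn_integral_add)
  also have "(\<integral>\<^sup>+x. ennreal (1/4) * indicator B x \<partial>M) = ennreal (1/4) * ennreal v"
    using Bs V by (simp add: nn_integral_cmult_indicator)
  also have "(\<integral>\<^sup>+x. ennreal c * indicator F x \<partial>M) = ennreal c * ennreal w"
    using Fs w by (simp add: nn_integral_cmult_indicator)
  also have "(\<integral>\<^sup>+x. ennreal (s/4) * (ennreal (f x / a) * indicator B x) \<partial>M) = ennreal (s/4) * ennreal v"
  proof -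
    have "(\<integral>\<^sup>+x. ennreal (s/4) * (ennreal (f x / a) * indicator B x) \<partial>M)
        = (\<integral>\<^sup>+x. ennreal (s/4 / a) * (ennreal (f x) * indicator B x) \<partial>M)"
    proof (intro nn_integral_cong)
      fix x
      have "ennreal (s/4) * ennreal (f x / a) = ennreal (s/4 * (f x / a))"
        using a s fnn[of x] by (intro ennreal_mult[symmetric]) auto
      also have "s/4 * (f x / a) = s/4/a * f x" by simp
      also have "ennreal (s/4/a * f x) = ennreal (s/4/a) * ennreal (f x)"
        using a s fnn[of x] by (intro ennreal_mult) auto
      finally show "ennreal (s/4) * (ennreal (f x / a) * indicator B x) = ennreal (s/4 / a) * (ennreal (f x) * indicator B x)"
        by (simp add: mult.assoc[symmetric])
    qed
    also have "\<dots> = ennreal (s/4 / a) * ennreal (a * v)"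
      using Bs fm by (subst nn_integral_cmult) (auto simp: U)
    also have "\<dots> = ennreal (s/4) * ennreal v"
      using a s v by (simp add: ennreal_mult[symmetric])
    finally show ?thesis .
  qed
  finally have "ennreal v \<le> ennreal (1/4 * v + s/4 * v + c * w)"
    using s v c w by (subst ennreal_lin3) auto
  then have "v \<le> 1/4 * v + s/4 * v + c * w"
    using s v c w by (subst (asm) ennreal_le_iff) auto
  moreover have "s/4 * v \<le> 1/4 * v" using s v by (intro mult_right_mono) auto
  ultimately have "v \<le> 2 * c * w" by linarith
  then have "ennreal v \<le> ennreal (2 * c * w)" by (rule ennreal_leI)
  also have "ennreal (2 * c * w) = ennreal ((1-s)/(2*\<eta>)) * emeasure M F"
  proof -
    have "2 * c * w = (1-s)/(2*\<eta>) * w" using eta by (simp add: c_def field_simps)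
    moreover have "ennreal ((1-s)/(2*\<eta>) * w) = ennreal ((1-s)/(2*\<eta>)) * ennreal w"
      using s eta w by (intro ennreal_mult) auto
    ultimately show ?thesis unfolding w(1) by metis
  qed
  finally show ?thesis using V by (simp add: F_def)
qed



definition wmeas :: "(complex \<Rightarrow> real) \<Rightarrow> complex set \<Rightarrow> complex measure" where
  "wmeas v Q = density lebesgue (\<lambda>z. ennreal (1/pi) * ennreal (v z) * indicator Q z)"

lemma sets_wmeas[simp, measurable_cong]: "sets (wmeas v Q) = sets lebesgue"
  by (simp add: wmeas_def)

lemma space_wmeas[simp]: "space (wmeas v Q) = UNIV"
  by (simp add: wmeas_def)

lemma wmeas_emeasure:
  assumes vm: "v \<in> borel_measurable lebesgue" and Qs: "Q \<in> sets lebesgue" and Bs: "B \<in> sets lebesgue"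
    and BQ: "B \<subseteq> Q"
  shows "emeasure (wmeas v Q) B = areaint B (\<lambda>z. ennreal (v z))"
proof -
  note [measurable] = vm Qs Bs
  have "emeasure (wmeas v Q) B = (\<integral>\<^sup>+z. ennreal (1/pi) * ennreal (v z) * indicator Q z * indicator B z \<partial>lebesgue)"
    unfolding wmeas_def using vm Qs Bs by (intro emeasure_density) measurable
  also have "\<dots> = (\<integral>\<^sup>+z. ennreal (1/pi) * (ennreal (v z) * indicator B z) \<partial>lebesgue)"
    using BQ by (intro nn_integral_cong) (auto simp: indicator_def)
  also have "\<dots> = areaint B (\<lambda>z. ennreal (v z))"
    unfolding areaint_def using vm Bs by (intro nn_integral_cmult) measurable
  finally show ?thesis .
qed

lemma wmeas_integral:
  assumes vm: "v \<in> borel_measurable lebesgue" and Qs: "Q \<in> sets lebesgue" and gm: "g \<in> borel_measurable lebesgue"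
  shows "(\<integral>\<^sup>+z. g z \<partial>wmeas v Q) = areaint Q (\<lambda>z. g z * ennreal (v z))"
proof -
  note [measurable] = vm Qs gm
  have "(\<integral>\<^sup>+z. g z \<partial>wmeas v Q) = (\<integral>\<^sup>+z. ennreal (1/pi) * ennreal (v z) * indicator Q z * g z \<partial>lebesgue)"
    unfolding wmeas_def using vm Qs gm by (intro nn_integral_density) measurable
  also have "\<dots> = (\<integral>\<^sup>+z. ennreal (1/pi) * (g z * ennreal (v z) * indicator Q z) \<partial>lebesgue)"
    by (intro nn_integral_cong) (simp add: mult_ac)
  also have "\<dots> = areaint Q (\<lambda>z. g z * ennreal (v z))"
    unfolding areaint_def using vm Qs gm by (intro nn_integral_cmult) measurable
  finally show ?thesis .
qed

lemma wmeas_null: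
  assumes vm: "v \<in> borel_measurable lebesgue" and Qs: "Q \<in> sets lebesgue" and N: "N \<in> null_sets lebesgue"
  shows "N \<in> null_sets (wmeas v Q)"
proof -
  have "AE z in lebesgue. z \<notin> N" using N by (rule AE_not_in)
  then have "AE z in lebesgue. z \<in> N \<longrightarrow> ennreal (1/pi) * ennreal (v z) * indicator Q z = 0"
    by eventually_elim auto
  then show ?thesis unfolding wmeas_def using vm Qs N
    by (subst null_sets_density_iff) auto
qed

lemma epow_one: "epow x 1 = x"
  by (cases "x = \<infinity>") (auto simp: epow_def ennreal_enn2real_if)

lemma avgp_one: "avgp 1 v E f = areaint E (\<lambda>z. ennreal (\<bar>f z\<bar> * v z)) / areaint E (\<lambda>z. ennreal (v z))"
  by (simp add: avgp_def epow_one)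

lemma ennreal_div_le:
  fixes x y K :: ennreal
  assumes "x \<le> K * y" "K < \<infinity>"
  shows "x / y \<le> K"
proof (cases "y = 0")
  case True
  then have "x = 0" using assms by simp
  then show ?thesis by simp
next
  case False
  show ?thesis
  proof (cases "y = \<infinity>")
    case True then show ?thesis by simp
  next
    case False
    have "x / y \<le> (K * y) / y" using assms(1) by (rule divide_right_mono_ennreal)
    also have "\<dots> = K" using \<open>y \<noteq> 0\<close> False by (simp add: ennreal_mult_divide_eq top_unique)
    finally show ?thesis .
  qed
qed

lemma real_hyp:
  fixes s C a vB sr :: real
  assumes s: "0 < s" and C: "0 < C" and a: "0 < a" and vB: "0 < vB" and sr: "0 \<le> sr"
    and h: "a \<le> C * (sr powr (1/s) / vB powr (1/s))"
  shows "vB \<le> C powr s * (a powr (-s) * sr)"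
proof -
  have "a powr s \<le> (C * (sr powr (1/s) / vB powr (1/s))) powr s"
    using h a s by (intro powr_mono2) auto
  also have "\<dots> = C powr s * ((sr powr (1/s)) powr s / (vB powr (1/s)) powr s)"
    using C sr vB by (simp add: powr_mult powr_divide)
  also have "(sr powr (1/s)) powr s = sr" using s sr by (simp add: powr_powr)
  also have "(vB powr (1/s)) powr s = vB" using s vB by (simp add: powr_powr)
  finally have *: "a powr s \<le> C powr s * (sr / vB)" .
  have "a powr s * vB \<le> C powr s * sr"
    using mult_right_mono[OF * less_imp_le[OF vB]] vB by (simp add: field_simps)
  then have "vB \<le> C powr s * sr / a powr s"
    using a by (simp add: field_simps)
  also have "\<dots> = C powr s * (a powr (-s) * sr)"
    using a by (simp add: powr_minus field_simps)
  finally show ?thesis .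
qed

lemma box_key:
  fixes u v :: "complex \<Rightarrow> real" and Q B :: "complex set" and s C K \<epsilon> \<eta> :: real
  assumes vm: "v \<in> borel_measurable lebesgue" and um: "u \<in> borel_measurable lebesgue"
    and Qs: "Q \<in> sets lebesgue" and Bs: "B \<in> sets lebesgue" and BQ: "B \<subseteq> Q"
    and s: "0 < s" "s < 1" and C: "0 < C" and Kdef: "K = C powr s" and eps: "0 < \<epsilon>" and eta: "0 < \<eta>"
    and epsK: "\<epsilon> powr s = 1/(4*K)" and etaK: "\<eta> powr (1-s) = 1/(4*K)"
    and VB: "areaint B (\<lambda>z. ennreal (v z)) < \<infinity>"
    and hypB: "avgp 1 v B u \<le> ennreal C * avgp s v B u"
    and apos: "0 < enn2real (avgp 1 v B u)"
  shows "emeasure (wmeas v Q) B \<le> ennreal ((1-s)/(2*\<eta>)) *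
     emeasure (wmeas v Q) (B \<inter> {x \<in> space (wmeas v Q). \<epsilon> * enn2real (avgp 1 v B u) < \<bar>u x\<bar>})"
proof -
  note [measurable] = vm um Qs Bs
  define a where "a = enn2real (avgp 1 v B u)"
  define UA where "UA = areaint B (\<lambda>z. ennreal (\<bar>u z\<bar> * v z))"
  define VA where "VA = areaint B (\<lambda>z. ennreal (v z))"
  have a: "0 < a" using apos by (simp add: a_def)
  have avg: "avgp 1 v B u = UA / VA" unfolding UA_def VA_def by (rule avgp_one)
  have avgfin: "avgp 1 v B u \<noteq> \<infinity>" using apos by auto
  then have avga: "avgp 1 v B u = ennreal a" unfolding a_def by (simp add: ennreal_enn2real_if)
  have VAfin: "VA \<noteq> \<infinity>" using VB by (simp add: VA_def)
  have VA0: "VA \<noteq> 0"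
  proof
    assume "VA = 0"
    then have "avgp 1 v B u = 0 \<or> avgp 1 v B u = \<infinity>" unfolding avg by simp
    then show False using apos avgfin by auto
  qed
  define vB where "vB = enn2real VA"
  have VAe: "VA = ennreal vB" using VAfin unfolding vB_def by (simp add: ennreal_enn2real_if)
  have vB: "0 < vB" using VA0 VAe by (metis ennreal_eq_0_iff not_less)
  have UAe: "UA = ennreal (a * vB)"
  proof -
    have "UA = UA * VA / VA" using VA0 VAfin by (simp add: ennreal_mult_divide_eq)
    also have "\<dots> = (UA / VA) * VA" by (simp only: ennreal_divide_times ennreal_times_divide)
    also have "\<dots> = ennreal a * ennreal vB" using avg avga VAe by simp
    also have "\<dots> = ennreal (a * vB)" using a vB by (simp add: ennreal_mult)
    finally show ?thesis .
  qed
  define M where "M = wmeas v Q"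
  have V: "emeasure M B = ennreal vB"
    unfolding M_def using wmeas_emeasure[OF vm Qs Bs BQ] VAe VA_def by simp
  have U: "(\<integral>\<^sup>+x. ennreal \<bar>u x\<bar> * indicator B x \<partial>M) = ennreal (a * vB)"
  proof -
    have "(\<integral>\<^sup>+x. ennreal \<bar>u x\<bar> * indicator B x \<partial>M) = areaint Q (\<lambda>z. ennreal \<bar>u z\<bar> * indicator B z * ennreal (v z))"
      unfolding M_def by (rule wmeas_integral[OF vm Qs]) measurable
    also have "\<dots> = UA"
      unfolding areaint_def UA_def
    proof (rule arg_cong[where f="\<lambda>t. ennreal (1/pi) * t"], rule nn_integral_cong)
      fix z
      show "ennreal \<bar>u z\<bar> * indicator B z * ennreal (v z) * indicator Q z = ennreal (\<bar>u z\<bar> * v z) * indicator B z"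
      proof (cases "z \<in> B")
        case True
        then have "z \<in> Q" using BQ by blast
        then show ?thesis using True by (simp add: ennreal_mult')
      qed simp
    qed
    finally show ?thesis using UAe by simp
  qed
  have hyp: "ennreal vB \<le> ennreal K * (\<integral>\<^sup>+x. ennreal ((\<bar>u x\<bar> / a) powr s) * indicator B x \<partial>M)"
  proof -
    define SA where "SA = areaint B (\<lambda>z. ennreal (\<bar>u z\<bar> powr s * v z))"
    have int: "(\<integral>\<^sup>+x. ennreal ((\<bar>u x\<bar> / a) powr s) * indicator B x \<partial>M) = ennreal (a powr (-s)) * SA"
    proof -
      have "(\<integral>\<^sup>+x. ennreal ((\<bar>u x\<bar> / a) powr s) * indicator B x \<partial>M)
          = areaint Q (\<lambda>z. ennreal ((\<bar>u z\<bar> / a) powr s) * indicator B z * ennreal (v z))"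
        unfolding M_def by (rule wmeas_integral[OF vm Qs]) measurable
      also have "\<dots> = ennreal (1/pi) * (\<integral>\<^sup>+z. ennreal (a powr (-s)) * (ennreal (\<bar>u z\<bar> powr s * v z) * indicator B z) \<partial>lebesgue)"
        unfolding areaint_def
      proof (rule arg_cong[where f="\<lambda>t. ennreal (1/pi) * t"], rule nn_integral_cong)
        fix z
        have "(\<bar>u z\<bar> / a) powr s = \<bar>u z\<bar> powr s / a powr s"
          by (rule powr_divide)
        also have "\<dots> = a powr (-s) * \<bar>u z\<bar> powr s"
          by (simp add: powr_minus divide_inverse mult.commute)
        finally have pe: "(\<bar>u z\<bar> / a) powr s = a powr (-s) * \<bar>u z\<bar> powr s" .
        have "ennreal ((\<bar>u z\<bar> / a) powr s) * ennreal (v z) = ennreal (a powr (-s)) * ennreal (\<bar>u z\<bar> powr s * v z)"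
          unfolding pe by (simp add: ennreal_mult' mult.assoc)
        then show "ennreal ((\<bar>u z\<bar> / a) powr s) * indicator B z * ennreal (v z) * indicator Q z =
            ennreal (a powr (-s)) * (ennreal (\<bar>u z\<bar> powr s * v z) * indicator B z)"
          using BQ by (auto simp: indicator_def mult_ac)
      qed
      also have "\<dots> = ennreal (a powr (-s)) * SA"
        unfolding SA_def areaint_def by (subst nn_integral_cmult) (measurable, simp add: mult_ac)
      finally show ?thesis .
    qed
    show ?thesis
    proof (cases "SA = \<infinity>")
      case True
      have "0 < a powr (-s)" using a by simp
      moreover have "0 < K" using C Kdef by simp
      ultimately show ?thesis unfolding int True by (simp add: ennreal_mult_top)
    next
      case False
      define sr where "sr = enn2real SA"
      have SAe: "SA = ennreal sr" and sr: "0 \<le> sr" using False unfolding sr_def by (auto simp: ennreal_enn2real_if)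
      have avgs: "avgp s v B u = ennreal (sr powr (1/s) / vB powr (1/s))"
      proof -
        have "avgp s v B u = epow SA (1/s) / epow VA (1/s)" unfolding avgp_def SA_def VA_def ..
        also have "\<dots> = ennreal (sr powr (1/s)) / ennreal (vB powr (1/s))"
          unfolding SAe VAe epow_def using sr vB by simp
        also have "\<dots> = ennreal (sr powr (1/s) / vB powr (1/s))"
          using vB by (intro divide_ennreal) auto
        finally show ?thesis .
      qed
      have "ennreal a \<le> ennreal (C * (sr powr (1/s) / vB powr (1/s)))"
      proof -
        have "ennreal C * ennreal (sr powr (1/s) / vB powr (1/s)) = ennreal (C * (sr powr (1/s) / vB powr (1/s)))"
          using C sr vB by (intro ennreal_mult[symmetric]) auto
        then show ?thesis using hypB unfolding avga avgs by simp
      qed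
      then have "a \<le> C * (sr powr (1/s) / vB powr (1/s))"
        using C sr vB by (subst (asm) ennreal_le_iff) auto
      then have "vB \<le> C powr s * (a powr (-s) * sr)"
        by (rule real_hyp[OF s(1) C a vB sr])
      then have "ennreal vB \<le> ennreal (K * (a powr (-s) * sr))" unfolding Kdef by (rule ennreal_leI)
      also have "\<dots> = ennreal K * (ennreal (a powr (-s)) * SA)"
        unfolding SAe using sr a Kdef C by (simp add: ennreal_mult)
      finally show ?thesis unfolding int .
    qed
  qed
  have K: "0 < K" using C Kdef by simp
  have "emeasure M B \<le> ennreal ((1-s)/(2*\<eta>)) * emeasure M (B \<inter> {x\<in>space M. \<epsilon> * a < \<bar>u x\<bar>})"
  proof (rule box_ineq[OF _ _ _ s K eps eta epsK etaK a less_imp_le[OF vB] V U hyp])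
    show "(\<lambda>x. \<bar>u x\<bar>) \<in> borel_measurable M" unfolding M_def by measurable
    show "\<And>x. 0 \<le> \<bar>u x\<bar>" by simp
    show "B \<in> sets M" unfolding M_def by simp
  qed
  then show ?thesis unfolding M_def a_def .
qed

lemma Qbox_tri:
  assumes "dyadic_grid D" "I \<in> D" "J \<in> D"
  shows "Qbox J \<subseteq> Qbox I \<or> Qbox I \<subseteq> Qbox J \<or> Qbox I \<inter> Qbox J \<in> null_sets lebesgue"
proof -
  have len: "0 < snd I" "snd I \<le> 1" "0 < snd J" "snd J \<le> 1"
    using assms unfolding dyadic_grid_def arclen_def by auto
  have "arc_set I \<inter> arc_set J = {} \<or> arc_set I \<subseteq> arc_set J \<or> arc_set J \<subseteq> arc_set I"
    using assms unfolding dyadic_grid_def by blast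
  then show ?thesis
    using Qbox_disj_null[of I J] Qbox_mono[of I J] Qbox_mono[of J I] len by blast
qed

lemma areaint_zero:
  assumes vm: "v \<in> borel_measurable lebesgue" and Bs: "B \<in> sets lebesgue"
    and z: "areaint B (\<lambda>z. ennreal (v z)) = 0"
  shows "areaint B (\<lambda>z. g z * ennreal (v z)) = 0"
proof -
  note [measurable] = vm Bs
  have "(\<integral>\<^sup>+z. ennreal (v z) * indicator B z \<partial>lebesgue) = 0"
    using z pi_gt_zero unfolding areaint_def by (simp add: ennreal_eq_0_iff)
  then have "AE z in lebesgue. ennreal (v z) * indicator B z = 0"
    by (subst (asm) nn_integral_0_iff_AE) auto
  then have ae: "AE z in lebesgue. g z * ennreal (v z) * indicator B z = 0"
    by eventually_elim (simp add: mult.assoc)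
  have "(\<integral>\<^sup>+z. g z * ennreal (v z) * indicator B z \<partial>lebesgue) = (\<integral>\<^sup>+z. 0 \<partial>lebesgue)"
    using nn_integral_cong_AE[OF ae] by simp
  then show ?thesis unfolding areaint_def by simp
qed

lemma areaint_mono_set:
  assumes "B \<subseteq> B'"
  shows "areaint B g \<le> areaint B' g"
  unfolding areaint_def using assms
  by (intro mult_left_mono nn_integral_mono) (auto simp: indicator_def)

lemma areaint_null:
  assumes N: "B \<in> null_sets lebesgue"
  shows "areaint B g = 0"
proof -
  have "AE z in lebesgue. z \<notin> B" using N by (rule AE_not_in)
  then have ae: "AE z in lebesgue. g z * indicator B z = 0" by eventually_elim auto
  have "(\<integral>\<^sup>+z. g z * indicator B z \<partial>lebesgue) = (\<integral>\<^sup>+z. 0 \<partial>lebesgue)"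
    using nn_integral_cong_AE[OF ae] by simp
  then show ?thesis unfolding areaint_def by simp
qed

lemma SUP_ind_eq:
  fixes f :: "'b set \<Rightarrow> ennreal"
  shows "(SUP B\<in>{B\<in>G. x \<in> B}. f B) = (SUP B\<in>G. f B * indicator B x)"
proof (rule antisym)
  show "(SUP B\<in>{B\<in>G. x \<in> B}. f B) \<le> (SUP B\<in>G. f B * indicator B x)"
  proof (rule SUP_least)
    fix B assume "B \<in> {B\<in>G. x \<in> B}"
    then have "f B * indicator B x \<le> (SUP B\<in>G. f B * indicator B x)" by (intro SUP_upper) auto
    then show "f B \<le> (SUP B\<in>G. f B * indicator B x)" using \<open>B \<in> {B\<in>G. x \<in> B}\<close> by simp
  qed
  show "(SUP B\<in>G. f B * indicator B x) \<le> (SUP B\<in>{B\<in>G. x \<in> B}. f B)"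
  proof (rule SUP_least)
    fix B assume B: "B \<in> G"
    show "f B * indicator B x \<le> (SUP B\<in>{B\<in>G. x \<in> B}. f B)"
    proof (cases "x \<in> B")
      case True then show ?thesis using B by (simp add: SUP_upper)
    qed simp
  qed
qed

lemma ennreal_inverse_antimono:
  fixes a b :: ennreal
  assumes "a \<le> b"
  shows "inverse b \<le> inverse a"
proof (cases "a = 0")
  case True then show ?thesis by simp
next
  case False
  show ?thesis
  proof (cases "b = \<infinity>")
    case True then show ?thesis by simp
  next
    case False
    then have "a \<noteq> \<infinity>" using assms by (auto simp: top_unique)
    define x y where "x = enn2real a" "y = enn2real b"
    have xy: "a = ennreal x" "b = ennreal y" "0 \<le> x" "0 \<le> y"
      using \<open>a \<noteq> \<infinity>\<close> False unfolding x_y_def by (auto simp: ennreal_enn2real_if)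
    have "0 < x" using \<open>a \<noteq> 0\<close> xy by (cases "x = 0") auto
    then have "x \<le> y" using assms xy by (simp add: ennreal_le_iff)
    then have "0 < y" using \<open>0 < x\<close> by simp
    have "inverse y \<le> inverse x" using \<open>0 < x\<close> \<open>x \<le> y\<close> by (auto intro: le_imp_inverse_le)
    then show ?thesis using xy \<open>0 < x\<close> \<open>0 < y\<close> by (simp add: inverse_ennreal ennreal_leI)
  qed
qed

lemma ennreal_divide_antimono:
  fixes x a b :: ennreal
  assumes "a \<le> b"
  shows "x / b \<le> x / a"
  unfolding divide_ennreal_def using ennreal_inverse_antimono[OF assms] by (intro mult_left_mono) auto

lemma meas_const_ind:
  assumes "B \<in> sets M"
  shows "(\<lambda>x. (k::ennreal) * indicator B x) \<in> borel_measurable M"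
  using assms by measurable

lemma areaint_restrict:
  "areaint E (\<lambda>z. ennreal (\<bar>u z * indicator Q z\<bar> * v z)) = areaint (E \<inter> Q) (\<lambda>z. ennreal (\<bar>u z\<bar> * v z))"
  unfolding areaint_def
  by (intro arg_cong[where f="\<lambda>t. ennreal (1/pi) * t"] nn_integral_cong) (auto simp: indicator_def)

lemma main_box:
  fixes u v :: "complex \<Rightarrow> real" and D :: "arc set" and C s K \<epsilon> \<eta> :: real and I :: arc
  assumes vm: "v \<in> borel_measurable lebesgue" and um: "u \<in> borel_measurable lebesgue"
    and grid: "dyadic_grid D" and cD: "countable D" and I: "I \<in> D"
    and hyp: "\<forall>J\<in>D. avgp 1 v (Qbox J) u \<le> ennreal C * avgp s v (Qbox J) u"
    and s: "0 < s" "s < 1" and C: "0 < C" and Kdef: "K = C powr s" and eps: "0 < \<epsilon>" and eta: "0 < \<eta>"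
    and epsK: "\<epsilon> powr s = 1/(4*K)" and etaK: "\<eta> powr (1-s) = 1/(4*K)"
  shows "wavg v (Qbox I) (dyadic_max D v (\<lambda>z. u z * indicator (Qbox I) z))
     \<le> (ennreal ((1-s)/(2*\<eta>)) * ennreal (2/\<epsilon>)) * avgp 1 v (Qbox I) u"
proof -
  note [measurable] = vm um
  define Q where "Q = Qbox I"
  have Qs[measurable]: "Q \<in> sets lebesgue" unfolding Q_def by (rule Qbox_sets)
  define Mx where "Mx = dyadic_max D v (\<lambda>z. u z * indicator Q z)"
  define VQ where "VQ = areaint Q (\<lambda>z. ennreal (v z))"
  define UQ where "UQ = areaint Q (\<lambda>z. ennreal (\<bar>u z\<bar> * v z))"
  define c where "c = (1-s)/(2*\<eta>)"
  define Kf where "Kf = ennreal c * ennreal (2/\<epsilon>)"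
  have "0 < c" using s eta unfolding c_def by simp
  then have Kf0: "Kf \<noteq> 0" using eps unfolding Kf_def by (simp add: ennreal_eq_0_iff)
  have wav: "wavg v Q Mx = areaint Q (\<lambda>z. Mx z * ennreal (v z)) / VQ" unfolding wavg_def VQ_def ..
  have av1: "avgp 1 v Q u = UQ / VQ" unfolding UQ_def VQ_def by (rule avgp_one)
  have goal: "wavg v Q Mx \<le> Kf * avgp 1 v Q u"
  proof (cases "VQ = \<infinity>")
    case True then show ?thesis unfolding wav by simp
  next
    case VQfin: False
    show ?thesis
    proof (cases "VQ = 0")
      case True
      have "areaint Q (\<lambda>z. Mx z * ennreal (v z)) = 0"
        using True unfolding VQ_def by (intro areaint_zero[OF vm Qs])
      then show ?thesis unfolding wav by simp
    next
      case VQ0: False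
      show ?thesis
      proof (cases "UQ = \<infinity>")
        case True
        then have "avgp 1 v Q u = \<infinity>" unfolding av1 using VQfin by (simp add: ennreal_top_divide)
        then show ?thesis using Kf0 by (simp add: ennreal_mult_top)
      next
        case UQfin: False
        define F where "F = {J\<in>D. Qbox J \<subseteq> Q}"
        have IF: "I \<in> F" using I by (simp add: F_def Q_def)
        have cF: "countable F" using cD by (simp add: F_def)
        define aB where "aB = (\<lambda>B. enn2real (avgp 1 v B u))"
        have avg_fin: "avgp 1 v B u = ennreal (aB B)" if Bs: "B \<in> sets lebesgue" and BQ: "B \<subseteq> Q" for B
        proof -
          have UB: "areaint B (\<lambda>z. ennreal (\<bar>u z\<bar> * v z)) \<noteq> \<infinity>"
            using areaint_mono_set[OF BQ, of "\<lambda>z. ennreal (\<bar>u z\<bar> * v z)"] UQfin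
            unfolding UQ_def by (auto simp: top_unique)
          have "avgp 1 v B u \<noteq> \<infinity>"
          proof (cases "areaint B (\<lambda>z. ennreal (v z)) = 0")
            case True
            have "areaint B (\<lambda>z. ennreal \<bar>u z\<bar> * ennreal (v z)) = 0"
              by (rule areaint_zero[OF vm Bs True])
            then have "areaint B (\<lambda>z. ennreal (\<bar>u z\<bar> * v z)) = 0" by (simp add: ennreal_mult')
            then show ?thesis by (simp add: avgp_one)
          next
            case False
            then show ?thesis using UB by (simp add: avgp_one ennreal_divide_eq_top_iff)
          qed
          then show ?thesis unfolding aB_def by (simp add: ennreal_enn2real_if)
        qed
        define msup where "msup = (\<lambda>z. SUP B\<in>Qbox ` F. ennreal (aB B) * indicator B z)"
        have ptw: "Mx z \<le> msup z" if zQ: "z \<in> Q" for z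
          unfolding Mx_def dyadic_max_def
        proof (rule SUP_least)
          fix J assume J: "J \<in> {J \<in> D. z \<in> Qbox J}"
          then have JD: "J \<in> D" and zJ: "z \<in> Qbox J" by auto
          have QJs: "Qbox J \<in> sets lebesgue" by (rule Qbox_sets)
          have num: "avgp 1 v (Qbox J) (\<lambda>z. u z * indicator Q z) =
              areaint (Qbox J \<inter> Q) (\<lambda>z. ennreal (\<bar>u z\<bar> * v z)) / areaint (Qbox J) (\<lambda>z. ennreal (v z))"
            by (simp add: avgp_one areaint_restrict)
          have tri: "Qbox J \<subseteq> Q \<or> Q \<subseteq> Qbox J \<or> Q \<inter> Qbox J \<in> null_sets lebesgue"
            using Qbox_tri[OF grid I JD] unfolding Q_def .
          show "avgp 1 v (Qbox J) (\<lambda>z. u z * indicator Q z) \<le> msup z"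
          proof -
            consider (a) "Qbox J \<subseteq> Q" | (b) "Q \<subseteq> Qbox J" | (c) "Q \<inter> Qbox J \<in> null_sets lebesgue"
              using tri by blast
            then show ?thesis
            proof cases
              case a
              then have "Qbox J \<inter> Q = Qbox J" by blast
              then have "avgp 1 v (Qbox J) (\<lambda>z. u z * indicator Q z) = avgp 1 v (Qbox J) u"
                unfolding num by (simp add: avgp_one)
              also have "\<dots> = ennreal (aB (Qbox J))" by (rule avg_fin[OF QJs a])
              also have "\<dots> = ennreal (aB (Qbox J)) * indicator (Qbox J) z" using zJ by simp
              also have "\<dots> \<le> msup z" unfolding msup_def
                using JD a by (intro SUP_upper) (auto simp: F_def)
              finally show ?thesis .
            next
              case b
              then have "Qbox J \<inter> Q = Q" by blast
              then have "avgp 1 v (Qbox J) (\<lambda>z. u z * indicator Q z) = UQ / areaint (Qbox J) (\<lambda>z. ennreal (v z))"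
                unfolding num UQ_def by simp
              also have "\<dots> \<le> UQ / VQ"
                unfolding VQ_def by (intro ennreal_divide_antimono areaint_mono_set b)
              also have "\<dots> = ennreal (aB Q)" using av1 avg_fin[OF Qs] by simp
              also have "\<dots> = ennreal (aB Q) * indicator Q z" using zQ by simp
              also have "\<dots> \<le> msup z" unfolding msup_def
                using IF by (intro SUP_upper) (auto simp: Q_def)
              finally show ?thesis .
            next
              case c
              then have "Qbox J \<inter> Q \<in> null_sets lebesgue" by (simp add: Int_commute)
              then have "avgp 1 v (Qbox J) (\<lambda>z. u z * indicator Q z) = 0"
                unfolding num by (simp add: areaint_null)
              then show ?thesis by simp
            qed
          qed
        qed
        have msup_m: "msup \<in> borel_measurable lebesgue"
          unfolding msup_def using cF by (intro borel_measurable_SUP) (auto intro!: meas_const_ind Qbox_sets)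
        have step1: "areaint Q (\<lambda>z. Mx z * ennreal (v z)) \<le> areaint Q (\<lambda>z. msup z * ennreal (v z))"
          unfolding areaint_def
        proof (intro mult_left_mono nn_integral_mono)
          fix z
          show "Mx z * ennreal (v z) * indicator Q z \<le> msup z * ennreal (v z) * indicator Q z"
            using ptw[of z] by (cases "z \<in> Q") (auto intro: mult_right_mono)
        qed simp
        define Mq where "Mq = wmeas v Q"
        have step2: "areaint Q (\<lambda>z. msup z * ennreal (v z)) = (\<integral>\<^sup>+z. msup z \<partial>Mq)"
          unfolding Mq_def by (rule wmeas_integral[OF vm Qs msup_m, symmetric])
        define e where "e = from_nat_into F"
        have Fne: "F \<noteq> {}" using IF by blast
        have rng: "range e = F" unfolding e_def using Fne cF by simp
        define Gn where "Gn = (\<lambda>n. Qbox ` e ` {..n})"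
        define mn where "mn = (\<lambda>n z. SUP B\<in>Gn n. ennreal (aB B) * indicator B z)"
        have GnF: "Gn n \<subseteq> Qbox ` F" for n using rng unfolding Gn_def by auto
        have UGn: "(\<Union>n. Gn n) = Qbox ` F" unfolding Gn_def using rng by auto
        have mn_sup: "(SUP n. mn n z) = msup z" for z
          unfolding mn_def msup_def by (simp add: SUP_UNION[symmetric] UGn)
        have mn_inc: "incseq mn"
        proof (rule incseq_SucI, rule le_funI)
          fix n z
          show "mn n z \<le> mn (Suc n) z" unfolding mn_def Gn_def
            by (rule SUP_subset_mono) auto
        qed
        have mn_m: "mn n \<in> borel_measurable Mq" for n
          unfolding mn_def Mq_def Gn_def
          by (intro borel_measurable_SUP) (auto intro!: meas_const_ind Qbox_sets)
        have intu: "(\<integral>\<^sup>+x. ennreal (2 * \<bar>u x\<bar> / \<epsilon>) \<partial>Mq) = ennreal (2/\<epsilon>) * UQ"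
        proof -
          have "(\<integral>\<^sup>+x. ennreal (2 * \<bar>u x\<bar> / \<epsilon>) \<partial>Mq) = areaint Q (\<lambda>z. ennreal (2 * \<bar>u z\<bar> / \<epsilon>) * ennreal (v z))"
            unfolding Mq_def by (rule wmeas_integral[OF vm Qs]) measurable
          also have "\<dots> = areaint Q (\<lambda>z. ennreal (2/\<epsilon>) * ennreal (\<bar>u z\<bar> * v z))"
          proof -
            have "ennreal (2 * \<bar>u z\<bar> / \<epsilon>) * ennreal (v z) = ennreal (2/\<epsilon>) * ennreal (\<bar>u z\<bar> * v z)" for z
            proof -
              have "2 * \<bar>u z\<bar> / \<epsilon> = 2/\<epsilon> * \<bar>u z\<bar>" by simp
              moreover have "ennreal (2/\<epsilon> * \<bar>u z\<bar>) = ennreal (2/\<epsilon>) * ennreal \<bar>u z\<bar>"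
                using eps by (intro ennreal_mult) auto
              ultimately have "ennreal (2 * \<bar>u z\<bar> / \<epsilon>) = ennreal (2/\<epsilon>) * ennreal \<bar>u z\<bar>"
                by metis
              moreover have "ennreal (\<bar>u z\<bar> * v z) = ennreal \<bar>u z\<bar> * ennreal (v z)" by (simp add: ennreal_mult')
              ultimately show ?thesis by (simp add: mult.assoc)
            qed
            then show ?thesis by simp
          qed
          also have "\<dots> = ennreal (2/\<epsilon>) * UQ"
          proof -
            have "(\<integral>\<^sup>+z. ennreal (2/\<epsilon>) * (ennreal (\<bar>u z\<bar> * v z) * indicator Q z) \<partial>lebesgue)
                = ennreal (2/\<epsilon>) * (\<integral>\<^sup>+z. ennreal (\<bar>u z\<bar> * v z) * indicator Q z \<partial>lebesgue)"
              by (rule nn_integral_cmult) measurable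
            then show ?thesis unfolding areaint_def UQ_def by (simp add: mult.assoc mult.left_commute)
          qed
          finally show ?thesis .
        qed
        have step3: "(\<integral>\<^sup>+z. mn n z \<partial>Mq) \<le> Kf * UQ" for n
        proof -
          have "(\<integral>\<^sup>+z. mn n z \<partial>Mq) = (\<integral>\<^sup>+z. (SUP B\<in>{B\<in>Gn n. z \<in> B}. ennreal (aB B)) \<partial>Mq)"
            unfolding mn_def by (simp add: SUP_ind_eq)
          also have "\<dots> \<le> ennreal c * (\<integral>\<^sup>+x. ennreal (2 * \<bar>u x\<bar> / \<epsilon>) \<partial>Mq)"
          proof (rule max_ineq)
            show "(\<lambda>x. \<bar>u x\<bar>) \<in> borel_measurable Mq" unfolding Mq_def by measurable
            show "finite (Gn n)" unfolding Gn_def by simp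
            show "Gn n \<subseteq> sets Mq" unfolding Gn_def Mq_def by (auto intro: Qbox_sets)
            show "\<forall>B\<in>Gn n. 0 \<le> aB B" by (simp add: aB_def)
            show "0 < \<epsilon>" by (rule eps)
            show "\<forall>B\<in>Gn n. \<forall>B'\<in>Gn n. B \<subseteq> B' \<or> B' \<subseteq> B \<or> B \<inter> B' \<in> null_sets Mq"
            proof (intro ballI)
              fix B B' assume B: "B \<in> Gn n" and B': "B' \<in> Gn n"
              have "B \<in> Qbox ` F" "B' \<in> Qbox ` F" using GnF B B' by blast+
              then obtain J J' where "J \<in> F" "J' \<in> F" "B = Qbox J" "B' = Qbox J'" by (meson imageE)
              then have "J \<in> D" "J' \<in> D" "B = Qbox J" "B' = Qbox J'" by (auto simp: F_def)
              then show "B \<subseteq> B' \<or> B' \<subseteq> B \<or> B \<inter> B' \<in> null_sets Mq"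
                using Qbox_tri[OF grid, of J J'] wmeas_null[OF vm Qs] unfolding Mq_def by blast
            qed
            show "\<forall>B\<in>Gn n. 0 < aB B \<longrightarrow> emeasure Mq B \<le> ennreal c * emeasure Mq (B \<inter> {x \<in> space Mq. \<epsilon> * aB B < \<bar>u x\<bar>})"
            proof (intro ballI impI)
              fix B assume B: "B \<in> Gn n" and apos: "0 < aB B"
              have "B \<in> Qbox ` F" using GnF B by blast
              then obtain J where "J \<in> F" "B = Qbox J" by (meson imageE)
              then have J: "J \<in> D" "Qbox J \<subseteq> Q" "B = Qbox J" by (auto simp: F_def)
              have BQ: "B \<subseteq> Q" using J by simp
              have Bs: "B \<in> sets lebesgue" using J by (simp add: Qbox_sets)
              have VB: "areaint B (\<lambda>z. ennreal (v z)) < \<infinity>"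
                using areaint_mono_set[OF BQ, of "\<lambda>z. ennreal (v z)"] VQfin
                unfolding VQ_def by (auto simp: top_unique less_top)
              have hypB: "avgp 1 v B u \<le> ennreal C * avgp s v B u" using hyp J by blast
              show "emeasure Mq B \<le> ennreal c * emeasure Mq (B \<inter> {x \<in> space Mq. \<epsilon> * aB B < \<bar>u x\<bar>})"
                unfolding Mq_def c_def aB_def
                by (rule box_key[OF vm um Qs Bs BQ s C Kdef eps eta epsK etaK VB hypB]) (use apos in \<open>simp add: aB_def\<close>)
            qed
          qed
          also have "\<dots> = Kf * UQ" unfolding intu Kf_def by (simp add: mult_ac)
          finally show ?thesis .
        qed
        have "(\<integral>\<^sup>+z. msup z \<partial>Mq) = (\<integral>\<^sup>+z. (SUP n. mn n z) \<partial>Mq)" by (simp add: mn_sup)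
        also have "\<dots> = (SUP n. \<integral>\<^sup>+z. mn n z \<partial>Mq)"
          using mn_inc mn_m by (intro nn_integral_monotone_convergence_SUP) auto
        also have "\<dots> \<le> Kf * UQ" by (intro SUP_least step3)
        finally have main: "areaint Q (\<lambda>z. Mx z * ennreal (v z)) \<le> Kf * UQ"
          using step1 step2 by simp
        have "wavg v Q Mx \<le> (Kf * UQ) / VQ" unfolding wav by (rule divide_right_mono_ennreal[OF main])
        also have "\<dots> = Kf * avgp 1 v Q u" unfolding av1 by (simp add: ennreal_times_divide)
        finally show ?thesis .
      qed
    qed
  qed
  then show ?thesis unfolding Q_def Mx_def Kf_def c_def .
qed

theorem proposition3p3:
  fixes u v :: "complex \<Rightarrow> real" and D :: "arc set" and C s :: real
  assumes "weight u" and "weight v" and "dyadic_grid D"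
    and "C > 0" and "0 < s" and "s < 1"
    and "\<forall>I\<in>D. avgp 1 v (Qbox I) u \<le> ennreal C * avgp s v (Qbox I) u"
  shows "in_Binf u D v"
proof -
  have um: "u \<in> borel_measurable lebesgue" using assms(1) by (simp add: weight_def)
  have vm: "v \<in> borel_measurable lebesgue" using assms(2) by (simp add: weight_def)
  have cD: "countable D" using assms(3) by (rule dyadic_countable)
  define K where "K = C powr s"
  have K: "0 < K" using assms(4) by (simp add: K_def)
  define \<epsilon> where "\<epsilon> = (1/(4*K)) powr (1/s)"
  define \<eta> where "\<eta> = (1/(4*K)) powr (1/(1-s))"
  have eps: "0 < \<epsilon>" using K by (simp add: \<epsilon>_def)
  have eta: "0 < \<eta>" using K by (simp add: \<eta>_def)
  have epsK: "\<epsilon> powr s = 1/(4*K)"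
    unfolding \<epsilon>_def using assms(5) K by (simp add: powr_powr)
  have etaK: "\<eta> powr (1-s) = 1/(4*K)"
    unfolding \<eta>_def using assms(6) K by (simp add: powr_powr)
  define Kf where "Kf = ennreal ((1-s)/(2*\<eta>)) * ennreal (2/\<epsilon>)"
  have Kfin: "Kf < \<infinity>" unfolding Kf_def by (simp add: ennreal_mult_less_top)
  have "Binf_const D v u \<le> Kf"
    unfolding Binf_const_def
  proof (rule SUP_least)
    fix I assume I: "I \<in> D"
    have "wavg v (Qbox I) (dyadic_max D v (\<lambda>z. u z * indicator (Qbox I) z)) \<le> Kf * avgp 1 v (Qbox I) u"
      unfolding Kf_def
      by (rule main_box[OF vm um assms(3) cD I assms(7) assms(5) assms(6) assms(4) K_def eps eta epsK etaK])
    then show "wavg v (Qbox I) (dyadic_max D v (\<lambda>z. u z * indicator (Qbox I) z)) / avgp 1 v (Qbox I) u \<le> Kf"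
      using Kfin by (rule ennreal_div_le)
  qed
  then show ?thesis unfolding in_Binf_def using Kfin by (rule le_less_trans)
qed

end
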